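(* Let $\Psi$ be a $C^1$ two-time electron–photon wave function on the set $\mathscr{S}$ of space-like configurations satisfying the free multi-time equations $$-i\hbar D_{\mathrm{ph}}\Psi = 0,\qquad -i\hbar D_{\mathrm{el}}\Psi + m_{\mathrm{el}}\Psi = 0\quad\text{in }\mathscr{S},$$ and let $X$ be any constant vector field on $\mathbb{R}^{1,1}$. Then the tensor current $j_X^{\mu\nu}$ is jointly conserved in $\mathscr{S}$: $$\partial_{x_{\mathrm{ph}}^\mu} j_X^{\mu\nu} = 0 \ \ (\nu=0,1),\qquad \partial_{x_{\mathrm{el}}^\nu} j_X^{\mu\nu}=0\ \ (\mu=0,1).$$
   Context: Minkowski space $\mathbb{R}^{1,1}$ has metric $\eta=\mathrm{diag}(1,-1)$; indices are raised/lowered with $\eta$ and repeated indices summed. Let $\gamma^0=\begin{pmatrix}0&1\\1&0\end{pmatrix}$, $\gamma^1=\begin{pmatrix}0&-1\\1&0\end{pmatrix}$, so $\gamma^\mu\gamma^\nu+\gamma^\nu\gamma^\mu=2\eta^{\mu\nu}\mathbb{1}$, and for a vector $X$ put $\gamma(X)=\gamma_\mu X^\mu$. The configuration spacetime is $\mathcal{M}=\mathbb{R}^{1,1}_{\mathrm{ph}}\times\mathbb{R}^{1,1}_{\mathrm{el}}$ with points $(\mathbf{x}_{\mathrm{ph}},\mathbf{x}_{\mathrm{el}})$, and $\mathscr{S}=\{(\mathbf{x}_{\mathrm{ph}},\mathbf{x}_{\mathrm{el}}):\eta(\mathbf{x}_{\mathrm{ph}}-\mathbf{x}_{\mathrm{el}},\mathbf{x}_{\mathrm{ph}}-\mathbf{x}_{\mathrm{el}})<0\}$.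 Let $E_-=\begin{pmatrix}0&1\\0&0\end{pmatrix}$, $E_+=\begin{pmatrix}0&0\\1&0\end{pmatrix}$, $e_-=(1,0)^T$, $e_+=(0,1)^T$. A two-time wave function is $\Psi=\sum_{a,b\in\{-,+\}}\psi_{ab}(\mathbf{x}_{\mathrm{ph}},\mathbf{x}_{\mathrm{el}})\,E_a\otimes e_b$ with complex-valued components $\psi_{ab}$ (first factor: photon, an anti-diagonal $2\times2$ matrix; second factor: electron, a vector in $\mathbb{C}^2$). Set $\gamma^\mu_{\mathrm{ph}}=\gamma^\mu\otimes\mathbb{1}$ (acting on the photon matrix factor by left multiplication), $\gamma^\nu_{\mathrm{el}}=\mathbb{1}\otimes\gamma^\nu$, $D_{\mathrm{ph}}=\gamma^\mu_{\mathrm{ph}}\partial_{x^\mu_{\mathrm{ph}}}$, $D_{\mathrm{el}}=\gamma^\nu_{\mathrm{el}}\partial_{x^\nu_{\mathrm{el}}}$. The Dirac adjoint is $\overline{\Psi}=\sum_{a,b}\overline{\psi_{ab}}\,(\gamma^0E_a^\dagger\gamma^0)\otimes(e_b^\dagger\gamma^0)$. Products are taken factorwise ($(A\otimes r)(B\otimes c)=AB\otimes rc$, with $rc$ a scalar, and right multiplication by $\gamma_{\mathrm{ph}}(X)=\gamma(X)\otimes\mathbb{1}$ acting on the photon matrix factor), $\mathrm{tr}_{\mathrm{ph}}$ is the trace over the photon matrix factor, and $$j_X^{\mu\nu}=\tfrac14\,\mathrm{tr}_{\mathrm{ph}}\{\overline{\Psi}\,\gamma^\mu_{\mathrm{ph}}\gamma^\nu_{\mathrm{el}}\,\Psi\,\gamma_{\mathrm{ph}}(X)\}.$$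 *)

theory Defs
  imports "HOL-Analysis.Analysis"
begin

text \<open>A configuration is a pair (x_ph, x_el). Minkowski indices mu, nu and spinor /
  matrix indices range over the naturals {0,1}; the sign labels - and + of
  E_a, e_b are encoded as 0 and 1 respectively.\<close>

type_synonym mpt = "real \<times> real"
type_synonym config = "mpt \<times> mpt"

definition mcomp :: "mpt \<Rightarrow> nat \<Rightarrow> real" where
  "mcomp x \<mu> = (if \<mu> = 0 then fst x else snd x)"

definition mbasis :: "nat \<Rightarrow> mpt" where
  "mbasis \<mu> = (if \<mu> = 0 then (1, 0) else (0, 1))"

definition eta :: "nat \<Rightarrow> nat \<Rightarrow> real" where
  "eta \<mu> \<nu> = (if \<mu> = \<nu> then (if \<mu> = 0 then 1 else -1) else 0)"

definition mform :: "mpt \<Rightarrow> mpt \<Rightarrow> real" where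
  "mform x y = (\<Sum>\<mu><2. \<Sum>\<nu><2. eta \<mu> \<nu> * mcomp x \<mu> * mcomp y \<nu>)"

definition spacelike :: "config set" where
  "spacelike = {(xph, xel). mform (xph - xel) (xph - xel) < 0}"

definition eph :: "nat \<Rightarrow> config" where "eph \<mu> = (mbasis \<mu>, 0)"
definition eel :: "nat \<Rightarrow> config" where "eel \<nu> = (0, mbasis \<nu>)"

definition pdiff :: "(config \<Rightarrow> complex) \<Rightarrow> config \<Rightarrow> config \<Rightarrow> complex" where
  "pdiff f p v = vector_derivative (\<lambda>t::real. f (p + t *\<^sub>R v)) (at 0)"

definition C1_on :: "config set \<Rightarrow> (config \<Rightarrow> complex) \<Rightarrow> bool" where
  "C1_on S f \<longleftrightarrow> (\<exists>f'. (\<forall>p\<in>S. (f has_derivative f' p) (at p)) \<and>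
                         (\<forall>v. continuous_on S (\<lambda>p. f' p v)))"

text \<open>Gamma matrices gamma^mu (upper index), entries (row, column).\<close>
definition gam :: "nat \<Rightarrow> nat \<Rightarrow> nat \<Rightarrow> complex" where
  "gam \<mu> i j =
     (if \<mu> = 0 then (if (i = 0 \<and> j = 1) \<or> (i = 1 \<and> j = 0) then 1 else 0)
      else (if i = 0 \<and> j = 1 then -1 else if i = 1 \<and> j = 0 then 1 else 0))"

text \<open>gamma(X) = gamma_mu X^mu with gamma_mu = eta_{mu nu} gamma^nu.\<close>
definition gamX :: "mpt \<Rightarrow> nat \<Rightarrow> nat \<Rightarrow> complex" where
  "gamX X i j = (\<Sum>\<mu><2. \<Sum>\<nu><2. complex_of_real (eta \<mu> \<nu> * mcomp X \<mu>) * gam \<nu> i j)"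

text \<open>E_- (a = 0), E_+ (a = 1); e_- (b = 0), e_+ (b = 1).\<close>
definition Emat :: "nat \<Rightarrow> nat \<Rightarrow> nat \<Rightarrow> complex" where
  "Emat a i j = (if a = 0 then (if i = 0 \<and> j = 1 then 1 else 0)
                 else (if i = 1 \<and> j = 0 then 1 else 0))"

definition evec :: "nat \<Rightarrow> nat \<Rightarrow> complex" where
  "evec b k = (if k = b then 1 else 0)"

text \<open>The wave function Psi = sum_{a,b} psi_ab E_a (x) e_b, as a tensor
  Psi[i,j,k] (i,j photon matrix indices, k electron index).\<close>
definition Psi :: "(nat \<Rightarrow> nat \<Rightarrow> config \<Rightarrow> complex) \<Rightarrow> config \<Rightarrow> nat \<Rightarrow> nat \<Rightarrow> nat \<Rightarrow> complex" where
  "Psi \<psi> p i j k = (\<Sum>a<2. \<Sum>b<2. \<psi> a b p * Emat a i j * evec b k)"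

text \<open>Dirac adjoint: sum_{a,b} conj(psi_ab) (gamma^0 E_a^dagger gamma^0) (x) (e_b^dagger gamma^0);
  entry [i,j,k] with (i,j) photon matrix indices, k the electron row-vector index.\<close>
definition Psibar :: "(nat \<Rightarrow> nat \<Rightarrow> config \<Rightarrow> complex) \<Rightarrow> config \<Rightarrow> nat \<Rightarrow> nat \<Rightarrow> nat \<Rightarrow> complex" where
  "Psibar \<psi> p i j k = (\<Sum>a<2. \<Sum>b<2. cnj (\<psi> a b p) *
      (\<Sum>l<2. \<Sum>n<2. gam 0 i l * cnj (Emat a n l) * gam 0 n j) *
      (\<Sum>l<2. cnj (evec b l) * gam 0 l k))"

definition Dph :: "(nat \<Rightarrow> nat \<Rightarrow> config \<Rightarrow> complex) \<Rightarrow> config \<Rightarrow> nat \<Rightarrow> nat \<Rightarrow> nat \<Rightarrow> complex" where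
  "Dph \<psi> p i j k = (\<Sum>\<mu><2. \<Sum>l<2. gam \<mu> i l * pdiff (\<lambda>q. Psi \<psi> q l j k) p (eph \<mu>))"

definition Del :: "(nat \<Rightarrow> nat \<Rightarrow> config \<Rightarrow> complex) \<Rightarrow> config \<Rightarrow> nat \<Rightarrow> nat \<Rightarrow> nat \<Rightarrow> complex" where
  "Del \<psi> p i j k = (\<Sum>\<nu><2. \<Sum>l<2. gam \<nu> k l * pdiff (\<lambda>q. Psi \<psi> q i j l) p (eel \<nu>))"

text \<open>j_X^{mu nu} = 1/4 tr_ph { Psibar gamma^mu_ph gamma^nu_el Psi gamma_ph(X) }.\<close>
definition jX :: "(nat \<Rightarrow> nat \<Rightarrow> config \<Rightarrow> complex) \<Rightarrow> mpt \<Rightarrow> nat \<Rightarrow> nat \<Rightarrow> config \<Rightarrow> complex" where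
  "jX \<psi> X \<mu> \<nu> p = (1/4) *
     (\<Sum>i<2. \<Sum>j<2. \<Sum>l<2. \<Sum>n<2. \<Sum>k<2. \<Sum>k'<2.
        Psibar \<psi> p i j k * gam \<mu> j l * Psi \<psi> p l n k' * gamX X n i * gam \<nu> k k')"

end

theory Submission
  imports Defs
begin

lemma pdiff_hd:
  assumes "(f has_derivative f') (at p)"
  shows "pdiff f p v = f' v"
proof -
  have l: "linear f'" using assms has_derivative_linear by blast
  have "((\<lambda>t::real. p + t *\<^sub>R v) has_derivative (\<lambda>t. t *\<^sub>R v)) (at 0)"
    by (auto intro!: derivative_eq_intros)
  moreover have "(f has_derivative f') (at (p + 0 *\<^sub>R v))" using assms by simp
  ultimately have "((\<lambda>t::real. f (p + t *\<^sub>R v)) has_derivative (\<lambda>t. f' (t *\<^sub>R v))) (at 0)"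
    using has_derivative_compose[of "\<lambda>t::real. p + t *\<^sub>R v" _ 0 UNIV f] by (simp add: o_def)
  hence "((\<lambda>t::real. f (p + t *\<^sub>R v)) has_vector_derivative f' v) (at 0)"
    unfolding has_vector_derivative_def using linear_cmul[OF l] by simp
  thus ?thesis unfolding pdiff_def by (rule vector_derivative_at)
qed

lemma lin_hd:
  fixes \<psi> :: "nat \<Rightarrow> nat \<Rightarrow> config \<Rightarrow> complex"
  assumes "\<And>a b. a < 2 \<Longrightarrow> b < 2 \<Longrightarrow> (\<psi> a b has_derivative f' a b) (at p)"
  shows "((\<lambda>q. \<Sum>a<2. \<Sum>b<2. \<psi> a b q * c a b) has_derivative (\<lambda>v. \<Sum>a<2. \<Sum>b<2. f' a b v * c a b)) (at p)"
  by (intro has_derivative_sum bounded_linear.has_derivative[OF bounded_linear_mult_left] assms) auto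

lemma lin_hd_cnj:
  fixes \<psi> :: "nat \<Rightarrow> nat \<Rightarrow> config \<Rightarrow> complex"
  assumes "\<And>a b. a < 2 \<Longrightarrow> b < 2 \<Longrightarrow> (\<psi> a b has_derivative f' a b) (at p)"
  shows "((\<lambda>q. \<Sum>a<2. \<Sum>b<2. cnj (\<psi> a b q) * c a b) has_derivative (\<lambda>v. \<Sum>a<2. \<Sum>b<2. cnj (f' a b v) * c a b)) (at p)"
  by (intro has_derivative_sum bounded_linear.has_derivative[OF bounded_linear_mult_left]
       bounded_linear.has_derivative[OF bounded_linear_cnj] assms) auto

lemma Psi_hd:
  assumes "\<And>a b. a < 2 \<Longrightarrow> b < 2 \<Longrightarrow> (\<psi> a b has_derivative f' a b) (at p)"
  shows "((\<lambda>q. Psi \<psi> q i j k) has_derivative (\<lambda>v. Psi (\<lambda>a b _. f' a b v) p i j k)) (at p)"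
  unfolding Psi_def mult.assoc by (rule lin_hd[OF assms])

lemma Psibar_hd:
  assumes "\<And>a b. a < 2 \<Longrightarrow> b < 2 \<Longrightarrow> (\<psi> a b has_derivative f' a b) (at p)"
  shows "((\<lambda>q. Psibar \<psi> q i j k) has_derivative (\<lambda>v. Psibar (\<lambda>a b _. f' a b v) p i j k)) (at p)"
  unfolding Psibar_def mult.assoc by (rule lin_hd_cnj[OF assms])

lemma jX_hd:
  assumes "\<And>a b. a < 2 \<Longrightarrow> b < 2 \<Longrightarrow> (\<psi> a b has_derivative f' a b) (at p)"
  shows "(jX \<psi> X \<mu> \<nu> has_derivative (\<lambda>v. (1/4) *
     (\<Sum>i<2. \<Sum>j<2. \<Sum>l<2. \<Sum>n<2. \<Sum>k<2. \<Sum>k'<2.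
        (Psibar (\<lambda>a b _. f' a b v) p i j k * gam \<mu> j l * Psi \<psi> p l n k'
        + Psibar \<psi> p i j k * gam \<mu> j l * Psi (\<lambda>a b _. f' a b v) p l n k') * gamX X n i * gam \<nu> k k'))) (at p)"
  unfolding jX_def[abs_def]
  apply (intro derivative_eq_intros Psi_hd Psibar_hd assms)
  apply (auto simp: algebra_simps intro!: Psi_hd Psibar_hd assms)
  done

lemma sum2: "(\<Sum>i<(2::nat). f i) = f 0 + f 1" by (simp add: numeral_2_eq_2)

theorem proposition1:
  fixes \<psi> :: "nat \<Rightarrow> nat \<Rightarrow> config \<Rightarrow> complex"
    and hbar m :: real
    and X :: mpt
  assumes hbar: "hbar > 0"
    and C1: "\<And>a b. a < 2 \<Longrightarrow> b < 2 \<Longrightarrow> C1_on spacelike (\<psi> a b)"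
    and eq_ph: "\<And>p i j k. p \<in> spacelike \<Longrightarrow> i < 2 \<Longrightarrow> j < 2 \<Longrightarrow> k < 2 \<Longrightarrow>
                  - \<i> * complex_of_real hbar * Dph \<psi> p i j k = 0"
    and eq_el: "\<And>p i j k. p \<in> spacelike \<Longrightarrow> i < 2 \<Longrightarrow> j < 2 \<Longrightarrow> k < 2 \<Longrightarrow>
                  - \<i> * complex_of_real hbar * Del \<psi> p i j k
                  + complex_of_real m * Psi \<psi> p i j k = 0"
  shows "\<forall>p\<in>spacelike.
           (\<forall>\<nu><2. (\<Sum>\<mu><2. pdiff (jX \<psi> X \<mu> \<nu>) p (eph \<mu>)) = 0) \<and>
           (\<forall>\<mu><2. (\<Sum>\<nu><2. pdiff (jX \<psi> X \<mu> \<nu>) p (eel \<nu>)) = 0)"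
proof
  fix p assume p: "p \<in> spacelike"
  define F where "F a b = (SOME f'. (\<psi> a b has_derivative f') (at p))" for a b
  have hd: "(\<psi> a b has_derivative F a b) (at p)" if "a < 2" "b < 2" for a b
  proof -
    from C1[OF that] p obtain f' where "(\<psi> a b has_derivative f') (at p)"
      unfolding C1_on_def by blast
    thus ?thesis unfolding F_def by (metis (mono_tags, lifting) someI)
  qed
  define S where "S \<mu> \<nu> v = 
     (\<Sum>i<2. \<Sum>j<2. \<Sum>l<2. \<Sum>n<2. \<Sum>k<2. \<Sum>k'<2.
        (Psibar (\<lambda>a b _. F a b v) p i j k * gam \<mu> j l * Psi \<psi> p l n k'
        + Psibar \<psi> p i j k * gam \<mu> j l * Psi (\<lambda>a b _. F a b v) p l n k') * gamX X n i * gam \<nu> k k')"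
    for \<mu> \<nu> v
  have pd: "pdiff (jX \<psi> X \<mu> \<nu>) p v = (1/4) * S \<mu> \<nu> v"
    for \<mu> \<nu> v unfolding S_def by (rule pdiff_hd[OF jX_hd[OF hd]])
  have pdP: "pdiff (\<lambda>q. Psi \<psi> q i j k) p v = Psi (\<lambda>a b _. F a b v) p i j k" for i j k v
    by (rule pdiff_hd[OF Psi_hd[OF hd]])
  have hb: "complex_of_real hbar \<noteq> 0" using hbar by simp
  have ph: "Dph \<psi> p i j k = 0" if "i<2" "j<2" "k<2" for i j k
    using eq_ph[OF p that] hb by simp
  have ph': "(\<Sum>\<mu><2. \<Sum>l<2. gam \<mu> i l * Psi (\<lambda>a b _. F a b (eph \<mu>)) p l j k) = 0"
    if "i<2" "j<2" "k<2" for i j k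
    using ph[OF that] unfolding Dph_def pdP .
  define c where "c = complex_of_real (m / hbar)"
  have el: "Del \<psi> p i j k = - \<i> * c * Psi \<psi> p i j k" if "i<2" "j<2" "k<2" for i j k
    using eq_el[OF p that] hb unfolding c_def by (simp add: field_simps)
  have el': "(\<Sum>\<nu><2. \<Sum>l<2. gam \<nu> k l * Psi (\<lambda>a b _. F a b (eel \<nu>)) p i j l) = - \<i> * c * Psi \<psi> p i j k"
    if "i<2" "j<2" "k<2" for i j k
    using el[OF that] unfolding Del_def pdP .
  have e1: "F (Suc 0) 0 (eph (Suc 0)) = F (Suc 0) 0 (eph 0)" "F (Suc 0) (Suc 0) (eph (Suc 0)) = F (Suc 0) (Suc 0) (eph 0)"
    using ph'[of 0 0 0] ph'[of 0 0 1] by (simp_all add: sum2 Psi_def Emat_def evec_def gam_def algebra_simps)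
  have e2: "F 0 0 (eph (Suc 0)) = - F 0 0 (eph 0)" "F 0 (Suc 0) (eph (Suc 0)) = - F 0 (Suc 0) (eph 0)"
    using ph'[of 1 1 0] ph'[of 1 1 1] by (simp_all add: sum2 Psi_def Emat_def evec_def gam_def add_eq_0_iff2)
  have ccnj: "cnj c = c" unfolding c_def by simp
  have f1: "F a (Suc 0) (eel (Suc 0)) = F a (Suc 0) (eel 0) + \<i> * c * \<psi> a 0 p"
     "F a 0 (eel (Suc 0)) = - F a 0 (eel 0) - \<i> * c * \<psi> a (Suc 0) p" if "a = 0 \<or> a = 1" for a
    using el'[of 0 1 0] el'[of 0 1 1] el'[of 1 0 0] el'[of 1 0 1] that
    by (auto simp: sum2 Psi_def Emat_def evec_def gam_def algebra_simps) (simp_all add: eq_neg_iff_add_eq_0 add_ac)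
  have f1': "F 0 (Suc 0) (eel (Suc 0)) = F 0 (Suc 0) (eel 0) + \<i> * c * \<psi> 0 0 p"
     "F 0 0 (eel (Suc 0)) = - F 0 0 (eel 0) - \<i> * c * \<psi> 0 (Suc 0) p"
     "F (Suc 0) (Suc 0) (eel (Suc 0)) = F (Suc 0) (Suc 0) (eel 0) + \<i> * c * \<psi> (Suc 0) 0 p"
     "F (Suc 0) 0 (eel (Suc 0)) = - F (Suc 0) 0 (eel 0) - \<i> * c * \<psi> (Suc 0) (Suc 0) p"
    using f1[of 0] f1[of 1] by auto
  show "(\<forall>\<nu><2. (\<Sum>\<mu><2. pdiff (jX \<psi> X \<mu> \<nu>) p (eph \<mu>)) = 0) \<and>
           (\<forall>\<mu><2. (\<Sum>\<nu><2. pdiff (jX \<psi> X \<mu> \<nu>) p (eel \<nu>)) = 0)"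
  proof (intro conjI allI impI)
    fix \<nu> :: nat assume "\<nu> < 2"
    then consider "\<nu> = 0" | "\<nu> = 1" by linarith
    then show "(\<Sum>\<mu><2. pdiff (jX \<psi> X \<mu> \<nu>) p (eph \<mu>)) = 0"
      by cases (simp_all add: pd S_def sum2 Psi_def Psibar_def Emat_def evec_def gam_def gamX_def e1 e2 algebra_simps)
  next
    fix \<mu> :: nat
    have "S 0 0 (eel 0) + S 0 (Suc 0) (eel (Suc 0)) = 0"
      by (simp add: S_def sum2 Psi_def Psibar_def Emat_def evec_def gam_def gamX_def eta_def f1' ccnj algebra_simps)
    then have g0: "(\<Sum>\<nu><2. pdiff (jX \<psi> X 0 \<nu>) p (eel \<nu>)) = 0"
      unfolding sum2 pd distrib_left[symmetric] by simp
    have "S (Suc 0) 0 (eel 0) + S (Suc 0) (Suc 0) (eel (Suc 0)) = 0"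
      by (simp add: S_def sum2 Psi_def Psibar_def Emat_def evec_def gam_def gamX_def eta_def f1' ccnj algebra_simps)
    then have g1: "(\<Sum>\<nu><2. pdiff (jX \<psi> X (Suc 0) \<nu>) p (eel \<nu>)) = 0"
      unfolding sum2 pd distrib_left[symmetric] by simp
    assume "\<mu> < 2"
    then consider "\<mu> = 0" | "\<mu> = Suc 0" by linarith
    then show "(\<Sum>\<nu><2. pdiff (jX \<psi> X \<mu> \<nu>) p (eel \<nu>)) = 0"
      using g0 g1 by cases auto
  qed
qed
end
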